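(* Let $H:[0,T]\times\mathbb{R}^N\times\mathbb{R}^N\to\mathbb{R}$, and suppose there are functions $f:[0,T]\times\mathbb{R}^N\times\mathbb{B}\to\mathbb{R}^N$, $l:[0,T]\times\mathbb{R}^N\times\mathbb{B}\to\mathbb{R}$, with $\mathbb{B}$ the closed unit ball of $\mathbb{R}^{N+1}$, such that $H(t,x,p)=\sup_{a\in\mathbb{B}}\{\langle p,f(t,x,a)\rangle-l(t,x,a)\}$ for all $t,x,p$ and (R1) $f$ and $l$ are continuous; (R2) for every $R\geq0$ there is an integrable $K_R:[0,T]\to[0,\infty)$ with $|f(t,x,a)-f(t,y,a)|+|l(t,x,a)-l(t,y,a)|\leq K_R(t)|x-y|$ for all $x,y\in\mathbb{B}_R$, $a\in\mathbb{B}$ and a.e. $t$; (R3) there is an integrable $C:[0,T]\to[0,\infty)$ with $|f(t,x,a)|+|l(t,x,a)|\leq C(t)(1+|x|)$ for all $x$, $a\in\mathbb{B}$ and a.e. $t$. Then $H$ satisfies condition (A) (see context).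
   Context: $\mathbb{B}_R$ is the closed ball of radius $R$ centered at $0$; $\|W\|:=\sup_{\xi\in W}|\xi|$; $H^*(t,x,v)=\sup_p\{\langle v,p\rangle-H(t,x,p)\}$ and $\mathrm{dom}\,H^*(t,x,\cdot)=\{v:H^*(t,x,v)\neq\pm\infty\}$. Conditions: (H1) $H$ continuous in all variables. (H2) $H(t,x,\cdot)$ convex. (H3) for every $R\geq0$ there is $C_R\geq0$ with $|H(t,x,p)-H(t,x,q)|\leq C_R|p-q|$ for $t\in[0,T]$, $x\in\mathbb{B}_R$, all $p,q$. (H4) there is an integrable $c\geq0$ with $|H(t,x,p)-H(t,x,q)|\leq c(t)(1+|x|)|p-q|$ for a.e. $t$, all $x,p,q$. (H5) for every $R\geq0$ there is an integrable $k_R\geq0$ with $|H(t,x,p)-H(t,y,p)|\leq k_R(t)(1+|p|)|x-y|$ for $x,y\in\mathbb{B}_R$, all $p$, a.e. $t$. Condition (A): $H$ satisfies (H1)–(H5) and there is a continuous $\lambda:[0,T]\times\mathbb{R}^N\to[0,\infty)$ with $\|\mathrm{dom}\,H^*(t,x,\cdot)\|\leq\lambda(t,x)$ and $\|H^*(t,x,\mathrm{dom}\,H^*(t,x,\cdot))\|\leq\lambda(t,x)$ for all $t,x$; for every $R\geq0$ there is an integrable $\zeta_R\geq0$ such that $\lambda(t,\cdot)$ is $\zeta_R(t)$-Lipschitz on $\mathbb{B}_R$ for a.e. $t$; and there is an integrable $\vartheta\geq0$ with $\lambda(t,x)\leq\vartheta(t)(1+|x|)$ for all $x$ and a.e. $t$.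 *)

theory Defs
  imports "HOL-Analysis.Analysis"
begin

text \<open>Hamiltonians H :: real => 'a => 'a => real on [0,T] x R^N x R^N, with R^N
  rendered as an arbitrary Euclidean space 'a.  "Integrable" means Lebesgue integrable
  on [0,T]; "a.e. t" means almost everywhere w.r.t. Lebesgue measure on [0,T].\<close>

definition integrable_nonneg :: "real \<Rightarrow> (real \<Rightarrow> real) \<Rightarrow> bool" where
  "integrable_nonneg T c \<longleftrightarrow> (\<forall>t\<in>{0..T}. 0 \<le> c t) \<and> integrable (lebesgue_on {0..T}) c"

definition H1 :: "real \<Rightarrow> (real \<Rightarrow> 'a::euclidean_space \<Rightarrow> 'a \<Rightarrow> real) \<Rightarrow> bool" where
  "H1 T H \<longleftrightarrow> continuous_on ({0..T} \<times> UNIV \<times> UNIV) (\<lambda>(t,x,p). H t x p)"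

definition H2 :: "real \<Rightarrow> (real \<Rightarrow> 'a::euclidean_space \<Rightarrow> 'a \<Rightarrow> real) \<Rightarrow> bool" where
  "H2 T H \<longleftrightarrow> (\<forall>t\<in>{0..T}. \<forall>x. convex_on UNIV (H t x))"

definition H3 :: "real \<Rightarrow> (real \<Rightarrow> 'a::euclidean_space \<Rightarrow> 'a \<Rightarrow> real) \<Rightarrow> bool" where
  "H3 T H \<longleftrightarrow> (\<forall>R\<ge>0. \<exists>C\<ge>0. \<forall>t\<in>{0..T}. \<forall>x\<in>cball 0 R. \<forall>p q.
      \<bar>H t x p - H t x q\<bar> \<le> C * norm (p - q))"

definition H4 :: "real \<Rightarrow> (real \<Rightarrow> 'a::euclidean_space \<Rightarrow> 'a \<Rightarrow> real) \<Rightarrow> bool" where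
  "H4 T H \<longleftrightarrow> (\<exists>c. integrable_nonneg T c \<and>
      (AE t in lebesgue_on {0..T}. \<forall>x p q.
         \<bar>H t x p - H t x q\<bar> \<le> c t * (1 + norm x) * norm (p - q)))"

definition H5 :: "real \<Rightarrow> (real \<Rightarrow> 'a::euclidean_space \<Rightarrow> 'a \<Rightarrow> real) \<Rightarrow> bool" where
  "H5 T H \<longleftrightarrow> (\<forall>R\<ge>0. \<exists>k. integrable_nonneg T k \<and>
      (AE t in lebesgue_on {0..T}. \<forall>x\<in>cball 0 R. \<forall>y\<in>cball 0 R. \<forall>p.
         \<bar>H t x p - H t y p\<bar> \<le> k t * (1 + norm p) * norm (x - y)))"

definition Hstar :: "(real \<Rightarrow> 'a::euclidean_space \<Rightarrow> 'a \<Rightarrow> real) \<Rightarrow> real \<Rightarrow> 'a \<Rightarrow> 'a \<Rightarrow> ereal" where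
  "Hstar H t x v = (SUP p. ereal (inner v p - H t x p))"

definition domHstar :: "(real \<Rightarrow> 'a::euclidean_space \<Rightarrow> 'a \<Rightarrow> real) \<Rightarrow> real \<Rightarrow> 'a \<Rightarrow> 'a set" where
  "domHstar H t x = {v. Hstar H t x v \<noteq> \<infinity> \<and> Hstar H t x v \<noteq> -\<infinity>}"

definition setnorm :: "'b::real_normed_vector set \<Rightarrow> ereal" where
  "setnorm W = (SUP \<xi>\<in>W. ereal (norm \<xi>))"

definition ereal_setnorm :: "ereal set \<Rightarrow> ereal" where
  "ereal_setnorm W = (SUP \<xi>\<in>W. \<bar>\<xi>\<bar>)"

definition condition_A :: "real \<Rightarrow> (real \<Rightarrow> 'a::euclidean_space \<Rightarrow> 'a \<Rightarrow> real) \<Rightarrow> bool" where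
  "condition_A T H \<longleftrightarrow> H1 T H \<and> H2 T H \<and> H3 T H \<and> H4 T H \<and> H5 T H \<and>
    (\<exists>lam :: real \<Rightarrow> 'a \<Rightarrow> real.
       continuous_on ({0..T} \<times> UNIV) (\<lambda>(t,x). lam t x) \<and>
       (\<forall>t\<in>{0..T}. \<forall>x. 0 \<le> lam t x) \<and>
       (\<forall>t\<in>{0..T}. \<forall>x. setnorm (domHstar H t x) \<le> ereal (lam t x)) \<and>
       (\<forall>t\<in>{0..T}. \<forall>x. ereal_setnorm (Hstar H t x ` domHstar H t x) \<le> ereal (lam t x)) \<and>
       (\<forall>R\<ge>0. \<exists>\<zeta>. integrable_nonneg T \<zeta> \<and>
          (AE t in lebesgue_on {0..T}. lipschitz_on (\<zeta> t) (cball 0 R) (lam t))) \<and>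
       (\<exists>\<theta>. integrable_nonneg T \<theta> \<and>
          (AE t in lebesgue_on {0..T}. \<forall>x. lam t x \<le> \<theta> t * (1 + norm x))))"

end

theory Submission imports Defs begin

lemma sup_diff_le:
  fixes u w :: "'c \<Rightarrow> real"
  assumes K: "K \<noteq> {}" and bu: "bdd_above (u`K)" and bw: "bdd_above (w`K)"
    and h: "\<forall>a\<in>K. \<bar>u a - w a\<bar> \<le> e"
  shows "\<bar>(SUP a\<in>K. u a) - (SUP a\<in>K. w a)\<bar> \<le> e"
proof -
  have 1: "(SUP a\<in>K. u a) \<le> (SUP a\<in>K. w a) + e"
  proof (rule cSUP_least[OF K])
    fix a assume a: "a \<in> K"
    have "w a \<le> (SUP a\<in>K. w a)" by (rule cSUP_upper[OF a bw])
    then show "u a \<le> (SUP a\<in>K. w a) + e" using h a by force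
  qed
  have 2: "(SUP a\<in>K. w a) \<le> (SUP a\<in>K. u a) + e"
  proof (rule cSUP_least[OF K])
    fix a assume a: "a \<in> K"
    have "u a \<le> (SUP a\<in>K. u a)" by (rule cSUP_upper[OF a bu])
    then show "w a \<le> (SUP a\<in>K. u a) + e" using h a by force
  qed
  from 1 2 show ?thesis by linarith
qed

lemma cont_sup:
  fixes g :: "'b::heine_borel \<Rightarrow> 'c::metric_space \<Rightarrow> real"
  assumes S: "closed S" and K: "compact K" "K \<noteq> {}"
    and g: "continuous_on (S \<times> K) (\<lambda>(s,a). g s a)"
  shows "continuous_on S (\<lambda>s. SUP a\<in>K. g s a)"
proof -
  have bdd: "bdd_above (g s ` K)" if "s \<in> S" for s
  proof -
    have "continuous_on K (\<lambda>a. (\<lambda>(s,a). g s a) (s,a))"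
      by (rule continuous_on_compose2[OF g]) (use that in \<open>auto intro!: continuous_intros\<close>)
    then have "continuous_on K (g s)" by simp
    then show ?thesis by (meson K(1) bounded_imp_bdd_above compact_continuous_image compact_imp_bounded)
  qed
  show ?thesis unfolding continuous_on_iff
  proof (intro ballI allI impI)
    fix s0 and e :: real assume s0: "s0 \<in> S" and e: "0 < e"
    let ?C = "(S \<inter> cball s0 1) \<times> K"
    have "compact ?C" using S K by (intro compact_Times closed_Int_compact) auto
    moreover have "continuous_on ?C (\<lambda>(s,a). g s a)" using g by (rule continuous_on_subset) auto
    ultimately have "uniformly_continuous_on ?C (\<lambda>(s,a). g s a)" using compact_uniformly_continuous by blast
    then obtain d0 where d0: "d0 > 0" and hd: "\<forall>x\<in>?C. \<forall>x'\<in>?C. dist x' x < d0 \<longrightarrow> dist ((\<lambda>(s,a). g s a) x') ((\<lambda>(s,a). g s a) x) < e/2"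
      using e unfolding uniformly_continuous_on_def by (meson half_gt_zero)
    show "\<exists>d>0. \<forall>x'\<in>S. dist x' s0 < d \<longrightarrow> dist (SUP a\<in>K. g x' a) (SUP a\<in>K. g s0 a) < e"
    proof (intro exI[of _ "min 1 d0"] conjI ballI impI)
      show "0 < min 1 d0" using d0 by simp
      fix s assume s: "s \<in> S" "dist s s0 < min 1 d0"
      have "\<forall>a\<in>K. \<bar>g s a - g s0 a\<bar> \<le> e/2"
      proof
        fix a assume a: "a \<in> K"
        have "(s,a) \<in> ?C" "(s0,a) \<in> ?C" using s s0 a by (auto simp: dist_commute)
        moreover have "dist (s,a) (s0,a) < d0" using s by (simp add: dist_Pair_Pair)
        ultimately have "dist (g s a) (g s0 a) < e/2" using hd by fastforce
        then show "\<bar>g s a - g s0 a\<bar> \<le> e/2" by (simp add: dist_real_def)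
      qed
      then have "\<bar>(SUP a\<in>K. g s a) - (SUP a\<in>K. g s0 a)\<bar> \<le> e/2"
        by (intro sup_diff_le K bdd s s0)
      then show "dist (SUP a\<in>K. g s a) (SUP a\<in>K. g s0 a) < e" using e by (simp add: dist_real_def)
    qed
  qed
qed

theorem theorem3p2:
  fixes T :: real
    and H :: "real \<Rightarrow> 'a::euclidean_space \<Rightarrow> 'a \<Rightarrow> real"
    and f :: "real \<Rightarrow> 'a \<Rightarrow> 'a \<times> real \<Rightarrow> 'a"
    and l :: "real \<Rightarrow> 'a \<Rightarrow> 'a \<times> real \<Rightarrow> real"
  assumes rep: "\<forall>t\<in>{0..T}. \<forall>x p. H t x p = (SUP a\<in>cball 0 1. inner p (f t x a) - l t x a)"
    and R1f: "continuous_on ({0..T} \<times> UNIV \<times> cball 0 1) (\<lambda>(t,x,a). f t x a)"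
    and R1l: "continuous_on ({0..T} \<times> UNIV \<times> cball 0 1) (\<lambda>(t,x,a). l t x a)"
    and R2: "\<forall>R\<ge>0. \<exists>K. (\<forall>t\<in>{0..T}. 0 \<le> K t) \<and> integrable (lebesgue_on {0..T}) K \<and>
              (AE t in lebesgue_on {0..T}. \<forall>x\<in>cball 0 R. \<forall>y\<in>cball 0 R. \<forall>a\<in>cball 0 1.
                 norm (f t x a - f t y a) + \<bar>l t x a - l t y a\<bar> \<le> K t * norm (x - y))"
    and R3: "\<exists>C. (\<forall>t\<in>{0..T}. 0 \<le> C t) \<and> integrable (lebesgue_on {0..T}) C \<and>
              (AE t in lebesgue_on {0..T}. \<forall>x. \<forall>a\<in>cball 0 1.
                 norm (f t x a) + \<bar>l t x a\<bar> \<le> C t * (1 + norm x))"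
  shows "condition_A T H"
proof -
  define B1 where "B1 = cball (0::'a\<times>real) 1"
  have B1c: "compact B1" and B1ne: "B1 \<noteq> {}" unfolding B1_def by auto
  define lam where "lam t x = (SUP a\<in>B1. norm (f t x a) + \<bar>l t x a\<bar>)" for t x
  have repB: "H t x p = (SUP a\<in>B1. inner p (f t x a) - l t x a)" if "t \<in> {0..T}" for t x p
    using rep that unfolding B1_def by blast
  have AEin: "AE t in lebesgue_on {0..T}. t \<in> {0..T}"
    by (rule AE_I2) simp
  have contfa: "continuous_on B1 (f t x)" if "t \<in> {0..T}" for t x
  proof -
    have "continuous_on B1 (\<lambda>a. (\<lambda>(t,x,a). f t x a) (t,x,a))"
      by (rule continuous_on_compose2[OF R1f]) (use that in \<open>auto simp: B1_def intro!: continuous_intros\<close>)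
    then show ?thesis by simp
  qed
  have contla: "continuous_on B1 (l t x)" if "t \<in> {0..T}" for t x
  proof -
    have "continuous_on B1 (\<lambda>a. (\<lambda>(t,x,a). l t x a) (t,x,a))"
      by (rule continuous_on_compose2[OF R1l]) (use that in \<open>auto simp: B1_def intro!: continuous_intros\<close>)
    then show ?thesis by simp
  qed
  have bddlam: "bdd_above ((\<lambda>a. norm (f t x a) + \<bar>l t x a\<bar>) ` B1)" if "t \<in> {0..T}" for t x
  proof -
    have "continuous_on B1 (\<lambda>a. norm (f t x a) + \<bar>l t x a\<bar>)"
      using contfa[OF that] contla[OF that] by (intro continuous_intros)
    then show ?thesis by (meson B1c bounded_imp_bdd_above compact_continuous_image compact_imp_bounded)
  qed
  have lam_ge: "norm (f t x a) + \<bar>l t x a\<bar> \<le> lam t x" if "t \<in> {0..T}" "a \<in> B1" for t x a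
    unfolding lam_def by (rule cSUP_upper[OF that(2) bddlam[OF that(1)]])
  have lam_nn: "0 \<le> lam t x" if "t \<in> {0..T}" for t x
  proof -
    have "(0::'a\<times>real) \<in> B1" by (simp add: B1_def)
    from lam_ge[OF that this, of x] show ?thesis by (smt (verit) norm_ge_zero)
  qed
  have fle: "norm (f t x a) \<le> lam t x" and lle: "\<bar>l t x a\<bar> \<le> lam t x"
    if "t \<in> {0..T}" "a \<in> B1" for t x a
    using lam_ge[OF that, of x] by (smt (verit) norm_ge_zero)+
  have bddH: "bdd_above ((\<lambda>a. inner p (f t x a) - l t x a) ` B1)" if "t \<in> {0..T}" for t x p
  proof (rule bdd_aboveI2)
    fix a assume a: "a \<in> B1"
    have "inner p (f t x a) \<le> norm p * norm (f t x a)" by (rule norm_cauchy_schwarz)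
    also have "\<dots> \<le> norm p * lam t x" using fle[OF that a] by (simp add: mult_left_mono)
    finally show "inner p (f t x a) - l t x a \<le> norm p * lam t x + lam t x"
      using lle[OF that a, of x] by linarith
  qed
  have Hle: "inner p (f t x a) - l t x a \<le> H t x p" if "t \<in> {0..T}" "a \<in> B1" for t x p a
    unfolding repB[OF that(1)] by (rule cSUP_upper[OF that(2) bddH[OF that(1)]])
  have cf3: "continuous_on (({0..T}\<times>UNIV\<times>UNIV) \<times> B1) (\<lambda>z::(real\<times>'a\<times>'a)\<times>('a\<times>real). f (fst (fst z)) (fst (snd (fst z))) (snd z))"
  proof -
    have "continuous_on (({0..T}\<times>UNIV\<times>UNIV) \<times> B1) (\<lambda>z::(real\<times>'a\<times>'a)\<times>('a\<times>real). (\<lambda>(t,x,a). f t x a) (fst (fst z), fst (snd (fst z)), snd z))"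
      by (rule continuous_on_compose2[OF R1f]) (auto simp: B1_def intro!: continuous_intros)
    then show ?thesis by simp
  qed
  have cl3: "continuous_on (({0..T}\<times>UNIV\<times>UNIV) \<times> B1) (\<lambda>z::(real\<times>'a\<times>'a)\<times>('a\<times>real). l (fst (fst z)) (fst (snd (fst z))) (snd z))"
  proof -
    have "continuous_on (({0..T}\<times>UNIV\<times>UNIV) \<times> B1) (\<lambda>z::(real\<times>'a\<times>'a)\<times>('a\<times>real). (\<lambda>(t,x,a). l t x a) (fst (fst z), fst (snd (fst z)), snd z))"
      by (rule continuous_on_compose2[OF R1l]) (auto simp: B1_def intro!: continuous_intros)
    then show ?thesis by simp
  qed
  have cf2: "continuous_on (({0..T}\<times>UNIV) \<times> B1) (\<lambda>z::(real\<times>'a)\<times>('a\<times>real). f (fst (fst z)) (snd (fst z)) (snd z))"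
  proof -
    have "continuous_on (({0..T}\<times>UNIV) \<times> B1) (\<lambda>z::(real\<times>'a)\<times>('a\<times>real). (\<lambda>(t,x,a). f t x a) (fst (fst z), snd (fst z), snd z))"
      by (rule continuous_on_compose2[OF R1f]) (auto simp: B1_def intro!: continuous_intros)
    then show ?thesis by simp
  qed
  have cl2: "continuous_on (({0..T}\<times>UNIV) \<times> B1) (\<lambda>z::(real\<times>'a)\<times>('a\<times>real). l (fst (fst z)) (snd (fst z)) (snd z))"
  proof -
    have "continuous_on (({0..T}\<times>UNIV) \<times> B1) (\<lambda>z::(real\<times>'a)\<times>('a\<times>real). (\<lambda>(t,x,a). l t x a) (fst (fst z), snd (fst z), snd z))"
      by (rule continuous_on_compose2[OF R1l]) (auto simp: B1_def intro!: continuous_intros)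
    then show ?thesis by simp
  qed
  have lamcont: "continuous_on ({0..T} \<times> UNIV) (\<lambda>(t,x). lam t x)"
  proof -
    have "continuous_on ({0..T} \<times> UNIV) (\<lambda>s. SUP a\<in>B1. (\<lambda>s a. norm (f (fst s) (snd s) a) + \<bar>l (fst s) (snd s) a\<bar>) s a)"
    proof (rule cont_sup[OF _ B1c B1ne])
      show "closed ({0..T} \<times> (UNIV::'a set))" by (intro closed_Times) auto
      show "continuous_on (({0..T} \<times> UNIV) \<times> B1)
        (\<lambda>(s, a). (\<lambda>s a. norm (f (fst s) (snd s) a) + \<bar>l (fst s) (snd s) a\<bar>) s a)"
        unfolding case_prod_beta using cf2 cl2 by (intro continuous_intros) auto
    qed
    then show ?thesis by (simp add: lam_def case_prod_beta)
  qed
  have h1: "H1 T H" unfolding H1_def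
  proof -
    have "continuous_on ({0..T} \<times> UNIV \<times> UNIV) (\<lambda>s. SUP a\<in>B1. (\<lambda>s a. inner (snd (snd s)) (f (fst s) (fst (snd s)) a) - l (fst s) (fst (snd s)) a) s a)"
    proof (rule cont_sup[OF _ B1c B1ne])
      show "closed ({0..T} \<times> (UNIV::'a set) \<times> (UNIV::'a set))" by (intro closed_Times) auto
      show "continuous_on (({0..T} \<times> UNIV \<times> UNIV) \<times> B1)
        (\<lambda>(s, a). (\<lambda>s a. inner (snd (snd s)) (f (fst s) (fst (snd s)) a) - l (fst s) (fst (snd s)) a) s a)"
        unfolding case_prod_beta using cf3 cl3 by (intro continuous_intros) auto
    qed
    then show "continuous_on ({0..T} \<times> UNIV \<times> UNIV) (\<lambda>(t, x, p). H t x p)"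
      by (rule continuous_on_eq) (auto simp: repB)
  qed
  have h2: "H2 T H" unfolding H2_def
  proof (intro ballI allI)
    fix t x assume t: "t \<in> {0..T}"
    show "convex_on UNIV (H t x)"
    proof (rule convex_onI)
      fix u :: real and p q :: 'a assume u: "0 < u" "u < 1"
      show "H t x ((1 - u) *\<^sub>R p + u *\<^sub>R q) \<le> (1 - u) * H t x p + u * H t x q"
        unfolding repB[OF t, of x "(1 - u) *\<^sub>R p + u *\<^sub>R q"]
      proof (rule cSUP_least[OF B1ne])
        fix a assume a: "a \<in> B1"
        have "inner ((1 - u) *\<^sub>R p + u *\<^sub>R q) (f t x a) - l t x a
            = (1 - u) * (inner p (f t x a) - l t x a) + u * (inner q (f t x a) - l t x a)"
          by (simp add: inner_add_left algebra_simps)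
        also have "\<dots> \<le> (1 - u) * H t x p + u * H t x q"
          using Hle[OF t a, of p x] Hle[OF t a, of q x] u
          by (intro add_mono mult_left_mono) auto
        finally show "inner ((1 - u) *\<^sub>R p + u *\<^sub>R q) (f t x a) - l t x a \<le> (1 - u) * H t x p + u * H t x q" .
      qed
    qed simp
  qed
  have Hlip: "\<bar>H t x p - H t x q\<bar> \<le> lam t x * norm (p - q)" if t: "t \<in> {0..T}" for t x p q
    unfolding repB[OF t]
  proof (rule sup_diff_le[OF B1ne bddH[OF t] bddH[OF t]], intro ballI)
    fix a assume a: "a \<in> B1"
    have "\<bar>inner p (f t x a) - l t x a - (inner q (f t x a) - l t x a)\<bar> = \<bar>inner (p - q) (f t x a)\<bar>"
      by (simp add: inner_diff_left)
    also have "\<dots> \<le> norm (p - q) * norm (f t x a)" by (rule Cauchy_Schwarz_ineq2)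
    also have "\<dots> \<le> norm (p - q) * lam t x" using fle[OF t a] by (simp add: mult_left_mono)
    finally show "\<bar>inner p (f t x a) - l t x a - (inner q (f t x a) - l t x a)\<bar> \<le> lam t x * norm (p - q)"
      by (simp add: mult.commute)
  qed
  have h3: "H3 T H" unfolding H3_def
  proof (intro allI impI)
    fix R :: real assume R: "0 \<le> R"
    have "compact ((\<lambda>(t,x). lam t x) ` ({0..T} \<times> cball 0 R))"
      by (rule compact_continuous_image[OF continuous_on_subset[OF lamcont]]) (auto intro: compact_Times)
    then obtain Bd where Bd: "Bd > 0" "\<forall>y\<in>(\<lambda>(t,x). lam t x) ` ({0..T} \<times> cball 0 R). norm y \<le> Bd"
      using compact_imp_bounded bounded_pos by metis
    show "\<exists>C\<ge>0. \<forall>t\<in>{0..T}. \<forall>x\<in>cball 0 R. \<forall>p q. \<bar>H t x p - H t x q\<bar> \<le> C * norm (p - q)"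
    proof (intro exI[of _ Bd] conjI ballI allI)
      show "0 \<le> Bd" using Bd by simp
      fix t and x p q :: 'a assume t: "t \<in> {0..T}" and x: "x \<in> cball (0::'a) R"
      have "norm (lam t x) \<le> Bd" using Bd(2) t x by (metis (no_types, lifting) SigmaI case_prod_conv image_eqI)
      then have "lam t x \<le> Bd" by simp
      then have "lam t x * norm (p - q) \<le> Bd * norm (p - q)" by (simp add: mult_right_mono)
      then show "\<bar>H t x p - H t x q\<bar> \<le> Bd * norm (p - q)" using Hlip[OF t, of x p q] by linarith
    qed
  qed
  obtain C where C0: "\<forall>t\<in>{0..T}. 0 \<le> C t" and Cint: "integrable (lebesgue_on {0..T}) C"
    and CAE: "AE t in lebesgue_on {0..T}. \<forall>x. \<forall>a\<in>cball 0 1. norm (f t x a) + \<bar>l t x a\<bar> \<le> C t * (1 + norm x)"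
    using R3 by blast
  have Cnn: "integrable_nonneg T C" using C0 Cint by (simp add: integrable_nonneg_def)
  have lamC: "AE t in lebesgue_on {0..T}. t \<in> {0..T} \<and> (\<forall>x. lam t x \<le> C t * (1 + norm x))"
    using AEin CAE
  proof eventually_elim
    case (elim t)
    then have t: "t \<in> {0..T}" and b: "\<forall>x. \<forall>a\<in>B1. norm (f t x a) + \<bar>l t x a\<bar> \<le> C t * (1 + norm x)"
      unfolding B1_def by blast+
    have "lam t x \<le> C t * (1 + norm x)" for x
      unfolding lam_def using b by (intro cSUP_least[OF B1ne]) blast
    then show ?case using t by blast
  qed
  have h4: "H4 T H" unfolding H4_def
  proof (intro exI[of _ C] conjI Cnn)
    show "AE t in lebesgue_on {0..T}. \<forall>x p q. \<bar>H t x p - H t x q\<bar> \<le> C t * (1 + norm x) * norm (p - q)"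
      using lamC
    proof eventually_elim
      case (elim t)
      show ?case
      proof (intro allI)
        fix x p q :: 'a
        have "lam t x * norm (p - q) \<le> C t * (1 + norm x) * norm (p - q)"
          using elim by (simp add: mult_right_mono)
        then show "\<bar>H t x p - H t x q\<bar> \<le> C t * (1 + norm x) * norm (p - q)"
          using Hlip[of t x p q] elim by linarith
      qed
    qed
  qed
  have R2': "\<exists>K. integrable_nonneg T K \<and> (AE t in lebesgue_on {0..T}. t \<in> {0..T} \<and> 0 \<le> K t \<and>
      (\<forall>x\<in>cball 0 R. \<forall>y\<in>cball 0 R. \<forall>a\<in>B1.
                 norm (f t x a - f t y a) + \<bar>l t x a - l t y a\<bar> \<le> K t * norm (x - y)))" if R0: "R \<ge> 0" for R
  proof -
    obtain K where KK: "(\<forall>t\<in>{0..T}. 0 \<le> K t) \<and> integrable (lebesgue_on {0..T}) K \<and>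
              (AE t in lebesgue_on {0..T}. \<forall>x\<in>cball 0 R. \<forall>y\<in>cball 0 R. \<forall>a\<in>cball 0 1.
                 norm (f t x a - f t y a) + \<bar>l t x a - l t y a\<bar> \<le> K t * norm (x - y))"
      using mp[OF spec[OF R2, of R] R0] by blast
    note K0 = KK[THEN conjunct1] and Kint = KK[THEN conjunct2, THEN conjunct1]
      and KAE = KK[THEN conjunct2, THEN conjunct2]
    have "AE t in lebesgue_on {0..T}. t \<in> {0..T} \<and> 0 \<le> K t \<and>
      (\<forall>x\<in>cball 0 R. \<forall>y\<in>cball 0 R. \<forall>a\<in>B1.
                 norm (f t x a - f t y a) + \<bar>l t x a - l t y a\<bar> \<le> K t * norm (x - y))"
      using AEin KAE
    proof eventually_elim
      case (elim t)
      show ?case unfolding B1_def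
      proof (intro conjI)
        show "t \<in> {0..T}" by (rule elim(1))
        show "0 \<le> K t" using K0 elim(1) by (rule bspec)
      qed (rule elim(2))
    qed
    moreover have "integrable_nonneg T K" using K0 Kint by (simp add: integrable_nonneg_def)
    ultimately show ?thesis by (intro exI[of _ K] conjI)
  qed
  have h5: "H5 T H" unfolding H5_def
  proof (intro allI impI)
    fix R :: real assume R: "0 \<le> R"
    obtain K where Knn: "integrable_nonneg T K" and KAE: "AE t in lebesgue_on {0..T}. t \<in> {0..T} \<and> 0 \<le> K t \<and>
      (\<forall>x\<in>cball 0 R. \<forall>y\<in>cball 0 R. \<forall>a\<in>B1.
                 norm (f t x a - f t y a) + \<bar>l t x a - l t y a\<bar> \<le> K t * norm (x - y))"
      using R2'[OF R] by blast
    show "\<exists>k. integrable_nonneg T k \<and> (AE t in lebesgue_on {0..T}. \<forall>x\<in>cball 0 R. \<forall>y\<in>cball 0 R. \<forall>p.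
         \<bar>H t x p - H t y p\<bar> \<le> k t * (1 + norm p) * norm (x - y))"
    proof (intro exI[of _ K] conjI Knn)
      show "AE t in lebesgue_on {0..T}. \<forall>x\<in>cball 0 R. \<forall>y\<in>cball 0 R. \<forall>p.
         \<bar>H t x p - H t y p\<bar> \<le> K t * (1 + norm p) * norm (x - y)"
        using KAE
      proof eventually_elim
        case (elim t)
        then have t: "t \<in> {0..T}" and K: "0 \<le> K t" by auto
        show ?case
        proof (intro ballI allI)
          fix x y p assume x: "x \<in> cball (0::'a) R" and y: "y \<in> cball (0::'a) R"
          show "\<bar>H t x p - H t y p\<bar> \<le> K t * (1 + norm p) * norm (x - y)"
            unfolding repB[OF t]
          proof (rule sup_diff_le[OF B1ne bddH[OF t] bddH[OF t]], intro ballI)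
            fix a assume a: "a \<in> B1"
            have e: "norm (f t x a - f t y a) + \<bar>l t x a - l t y a\<bar> \<le> K t * norm (x - y)"
              using elim x y a by blast
            have "\<bar>inner p (f t x a) - l t x a - (inner p (f t y a) - l t y a)\<bar>
                = \<bar>inner p (f t x a - f t y a) - (l t x a - l t y a)\<bar>"
              by (simp add: inner_diff_right)
            also have "\<dots> \<le> \<bar>inner p (f t x a - f t y a)\<bar> + \<bar>l t x a - l t y a\<bar>" by linarith
            also have "\<dots> \<le> norm p * norm (f t x a - f t y a) + \<bar>l t x a - l t y a\<bar>"
              using Cauchy_Schwarz_ineq2 by (intro add_right_mono) auto
            also have "\<dots> \<le> (1 + norm p) * (norm (f t x a - f t y a) + \<bar>l t x a - l t y a\<bar>)"
              by (simp add: algebra_simps)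
            also have "\<dots> \<le> (1 + norm p) * (K t * norm (x - y))"
              using e by (intro mult_left_mono) auto
            finally show "\<bar>inner p (f t x a) - l t x a - (inner p (f t y a) - l t y a)\<bar>
                \<le> K t * (1 + norm p) * norm (x - y)" by (simp add: algebra_simps)
          qed
        qed
      qed
    qed
  qed
  have hull: "v \<in> convex hull (f t x ` B1)" if t: "t \<in> {0..T}" and v: "v \<in> domHstar H t x" for t x v
  proof (rule ccontr)
    assume nv: "v \<notin> convex hull (f t x ` B1)"
    have "compact (convex hull (f t x ` B1))"
      by (intro compact_convex_hull compact_continuous_image contfa[OF t] B1c)
    then obtain a b where ab: "inner a v < b" "\<forall>w\<in>convex hull (f t x ` B1). b < inner a w"
      using separating_hyperplane_closed_point[OF convex_convex_hull compact_imp_closed nv] by blast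
    from v obtain r where r: "Hstar H t x v = ereal r"
      unfolding domHstar_def by (cases "Hstar H t x v") auto
    have rle: "inner v p - H t x p \<le> r" for p
    proof -
      have "ereal (inner v p - H t x p) \<le> Hstar H t x v"
        unfolding Hstar_def by (rule SUP_upper) simp
      then show ?thesis using r by simp
    qed
    define d where "d = b - inner a v"
    have d: "d > 0" using ab(1) by (simp add: d_def)
    define s where "s = (\<bar>r\<bar> + lam t x + 1) / d"
    have s: "s > 0" using d lam_nn[OF t, of x] by (simp add: s_def)
    have sd: "s * d = \<bar>r\<bar> + lam t x + 1" using d by (simp add: s_def)
    have Hp: "H t x (-(s *\<^sub>R a)) \<le> - s * b + lam t x"
      unfolding repB[OF t]
    proof (rule cSUP_least[OF B1ne])
      fix a' assume a': "a' \<in> B1"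
      have "f t x a' \<in> convex hull (f t x ` B1)" using a' by (simp add: hull_inc)
      then have "b < inner a (f t x a')" using ab(2) by blast
      then have "- s * inner a (f t x a') \<le> - s * b" using s by simp
      moreover have "- l t x a' \<le> lam t x" using lle[OF t a', of x] by linarith
      ultimately show "inner (-(s *\<^sub>R a)) (f t x a') - l t x a' \<le> - s * b + lam t x"
        by simp
    qed
    have "inner v (-(s *\<^sub>R a)) - H t x (-(s *\<^sub>R a)) \<ge> s * d - lam t x"
      using Hp by (simp add: d_def algebra_simps inner_commute)
    with rle[of "-(s *\<^sub>R a)"] sd show False by linarith
  qed
  have lamt: "\<exists>lam :: real \<Rightarrow> 'a \<Rightarrow> real.
       continuous_on ({0..T} \<times> UNIV) (\<lambda>(t,x). lam t x) \<and>
       (\<forall>t\<in>{0..T}. \<forall>x. 0 \<le> lam t x) \<and>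
       (\<forall>t\<in>{0..T}. \<forall>x. setnorm (domHstar H t x) \<le> ereal (lam t x)) \<and>
       (\<forall>t\<in>{0..T}. \<forall>x. ereal_setnorm (Hstar H t x ` domHstar H t x) \<le> ereal (lam t x)) \<and>
       (\<forall>R\<ge>0. \<exists>\<zeta>. integrable_nonneg T \<zeta> \<and>
          (AE t in lebesgue_on {0..T}. lipschitz_on (\<zeta> t) (cball 0 R) (lam t))) \<and>
       (\<exists>\<theta>. integrable_nonneg T \<theta> \<and>
          (AE t in lebesgue_on {0..T}. \<forall>x. lam t x \<le> \<theta> t * (1 + norm x)))"
  proof (intro exI[of _ lam] conjI ballI allI impI)
    show "continuous_on ({0..T} \<times> UNIV) (\<lambda>(t,x). lam t x)" by (rule lamcont)
    fix t x assume t: "t \<in> {0..T}"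
    show "0 \<le> lam t x" by (rule lam_nn[OF t])
  next
    fix t x assume t: "t \<in> {0..T}"
    show "setnorm (domHstar H t x) \<le> ereal (lam t x)"
      unfolding setnorm_def
    proof (rule SUP_least)
      fix v assume v: "v \<in> domHstar H t x"
      have "convex hull (f t x ` B1) \<subseteq> cball 0 (lam t x)"
        by (rule hull_minimal) (use fle[OF t] in auto)
      then have "norm v \<le> lam t x" using hull[OF t v] by auto
      then show "ereal (norm v) \<le> ereal (lam t x)" by simp
    qed
  next
    fix t x assume t: "t \<in> {0..T}"
    show "ereal_setnorm (Hstar H t x ` domHstar H t x) \<le> ereal (lam t x)"
      unfolding ereal_setnorm_def
    proof (rule SUP_least)
      fix w assume "w \<in> Hstar H t x ` domHstar H t x"
      then obtain v where v: "v \<in> domHstar H t x" and w: "w = Hstar H t x v" by blast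
      from v obtain r where r: "Hstar H t x v = ereal r"
        unfolding domHstar_def by (cases "Hstar H t x v") auto
      have "ereal (inner v 0 - H t x 0) \<le> Hstar H t x v"
        unfolding Hstar_def by (rule SUP_upper) simp
      moreover have "H t x 0 \<le> lam t x"
        unfolding repB[OF t]
      proof (rule cSUP_least[OF B1ne])
        fix a assume a: "a \<in> B1"
        show "inner 0 (f t x a) - l t x a \<le> lam t x" using lle[OF t a, of x] by simp
      qed
      ultimately have lo: "- lam t x \<le> r" using r by simp
      have "Hstar H t x v \<le> ereal (lam t x)"
        unfolding Hstar_def
      proof (rule SUP_least)
        fix p
        have "convex hull (f t x ` B1) \<subseteq> {w. inner p w \<le> H t x p + lam t x}"
        proof (rule hull_minimal)
          show "f t x ` B1 \<subseteq> {w. inner p w \<le> H t x p + lam t x}"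
          proof
            fix w assume "w \<in> f t x ` B1"
            then obtain a where a: "a \<in> B1" "w = f t x a" by blast
            show "w \<in> {w. inner p w \<le> H t x p + lam t x}"
              using Hle[OF t a(1), of p x] lle[OF t a(1), of x] a(2) by simp
          qed
          show "convex {w. inner p w \<le> H t x p + lam t x}" by (rule convex_halfspace_le)
        qed
        then have "inner p v \<le> H t x p + lam t x" using hull[OF t v] by blast
        then show "ereal (inner v p - H t x p) \<le> ereal (lam t x)" by (simp add: inner_commute)
      qed
      then have hi: "r \<le> lam t x" using r by simp
      show "\<bar>w\<bar> \<le> ereal (lam t x)" using w r lo hi by simp
    qed
  next
    fix R :: real assume R: "0 \<le> R"
    obtain K where Knn: "integrable_nonneg T K" and KAE: "AE t in lebesgue_on {0..T}. t \<in> {0..T} \<and> 0 \<le> K t \<and>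
      (\<forall>x\<in>cball 0 R. \<forall>y\<in>cball 0 R. \<forall>a\<in>B1.
                 norm (f t x a - f t y a) + \<bar>l t x a - l t y a\<bar> \<le> K t * norm (x - y))"
      using R2'[OF R] by blast
    show "\<exists>\<zeta>. integrable_nonneg T \<zeta> \<and> (AE t in lebesgue_on {0..T}. lipschitz_on (\<zeta> t) (cball 0 R) (lam t))"
    proof (intro exI[of _ K] conjI Knn)
      show "AE t in lebesgue_on {0..T}. lipschitz_on (K t) (cball 0 R) (lam t)"
        using KAE
      proof eventually_elim
        case (elim t)
        then have t: "t \<in> {0..T}" and K: "0 \<le> K t" by auto
        show ?case unfolding lipschitz_on_def
        proof (intro conjI K ballI)
          fix x y assume x: "x \<in> cball (0::'a) R" and y: "y \<in> cball (0::'a) R"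
          have "\<bar>lam t x - lam t y\<bar> \<le> K t * norm (x - y)"
            unfolding lam_def
          proof (rule sup_diff_le[OF B1ne bddlam[OF t] bddlam[OF t]], intro ballI)
            fix a assume a: "a \<in> B1"
            have e: "norm (f t x a - f t y a) + \<bar>l t x a - l t y a\<bar> \<le> K t * norm (x - y)"
              using elim x y a by blast
            have "\<bar>norm (f t x a) - norm (f t y a)\<bar> \<le> norm (f t x a - f t y a)"
              by (rule norm_triangle_ineq3)
            then show "\<bar>norm (f t x a) + \<bar>l t x a\<bar> - (norm (f t y a) + \<bar>l t y a\<bar>)\<bar> \<le> K t * norm (x - y)"
              using e by linarith
          qed
          then show "dist (lam t x) (lam t y) \<le> K t * dist x y" by (simp add: dist_real_def dist_norm)
        qed
      qed
    qed
  next
    show "\<exists>\<theta>. integrable_nonneg T \<theta> \<and> (AE t in lebesgue_on {0..T}. \<forall>x. lam t x \<le> \<theta> t * (1 + norm x))"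
    proof (intro exI[of _ C] conjI Cnn)
      show "AE t in lebesgue_on {0..T}. \<forall>x. lam t x \<le> C t * (1 + norm x)"
        using lamC by eventually_elim blast
    qed
  qed
  show ?thesis unfolding condition_A_def using h1 h2 h3 h4 h5 lamt by blast
qed

end
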